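(* Let $G$ be a graph with vertex set $V$, each vertex carrying a finite-dimensional Hilbert space, let $\alpha$ be a QCA of range $R$, let $F\subseteq V$, and let $\mathcal{P}(\alpha,F)$ be the commutant of $\mathcal{A}(\mathrm{Int}(F))$ in $\alpha(\mathcal{A}(F))$. Then $\mathcal{P}(\alpha,F)$ is a $2R$-visibly simple algebra.
   Context: For a set $S$ of sites, $\mathcal{A}(S)$ is the algebra of operators supported on $S$ (operators on $\bigotimes_{x\in S}\mathcal{H}_x$ tensored with the identity); the support of an operator is the minimal such set (scalars have empty support). A QCA of range $R$ is a $*$-automorphism $\alpha$ of the full operator algebra such that for each site $x$ and each $O$ supported on $\{x\}$, $\alpha(O)$ is supported on sites within graph distance $R$ of $x$. $\mathrm{Int}(F)=\{x: \text{all sites within distance } R \text{ of } x \text{ lie in } F\}$. An algebra $\mathcal{A}$ is $l$-visibly simple if for every $O\in\mathcal{A}$ and every site $x$ in the support of $O$ there is $P\in\mathcal{A}$ supported within distance $l$ of $x$ with $[O,P]\ne0$. *)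

theory Defs
  imports Complex_Main
begin

text \<open>Site x carries the
Hilbert space C^(d x). A basis configuration of the tensor product is a function
s :: 'v => nat with s x < d x on V and s x = 0 off V. Operators on the tensor
product are complex matrices indexed by configurations (zero outside).\<close>

type_synonym 'v op = "('v \<Rightarrow> nat) \<Rightarrow> ('v \<Rightarrow> nat) \<Rightarrow> complex"

definition confs :: "'v set \<Rightarrow> ('v \<Rightarrow> nat) \<Rightarrow> ('v \<Rightarrow> nat) set" where
  "confs V d = {s. (\<forall>x\<in>V. s x < d x) \<and> (\<forall>x. x \<notin> V \<longrightarrow> s x = 0)}"

definition ops :: "'v set \<Rightarrow> ('v \<Rightarrow> nat) \<Rightarrow> 'v op set" where
  "ops V d = {A. \<forall>s t. (s \<notin> confs V d \<or> t \<notin> confs V d) \<longrightarrow> A s t = 0}"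

definition opmult :: "'v set \<Rightarrow> ('v \<Rightarrow> nat) \<Rightarrow> 'v op \<Rightarrow> 'v op \<Rightarrow> 'v op" where
  "opmult V d A B = (\<lambda>s t. \<Sum>u\<in>confs V d. A s u * B u t)"

definition opadd :: "'v op \<Rightarrow> 'v op \<Rightarrow> 'v op" where
  "opadd A B = (\<lambda>s t. A s t + B s t)"

definition opscale :: "complex \<Rightarrow> 'v op \<Rightarrow> 'v op" where
  "opscale c A = (\<lambda>s t. c * A s t)"

definition opadj :: "'v op \<Rightarrow> 'v op" where
  "opadj A = (\<lambda>s t. cnj (A t s))"

definition opid :: "'v set \<Rightarrow> ('v \<Rightarrow> nat) \<Rightarrow> 'v op" where
  "opid V d = (\<lambda>s t. if s \<in> confs V d \<and> s = t then 1 else 0)"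

text \<open>A is supported on S: A = A_S \<otimes> identity on V - S, written out on matrix entries.\<close>
definition supported_on :: "'v set \<Rightarrow> ('v \<Rightarrow> nat) \<Rightarrow> 'v set \<Rightarrow> 'v op \<Rightarrow> bool" where
  "supported_on V d S A \<longleftrightarrow> A \<in> ops V d \<and>
     (\<forall>s\<in>confs V d. \<forall>t\<in>confs V d. (\<exists>x\<in>V - S. s x \<noteq> t x) \<longrightarrow> A s t = 0) \<and>
     (\<forall>s\<in>confs V d. \<forall>t\<in>confs V d. \<forall>s'\<in>confs V d. \<forall>t'\<in>confs V d.
        (\<forall>x\<in>S. s x = s' x \<and> t x = t' x) \<and> (\<forall>x\<in>V - S. s x = t x \<and> s' x = t' x)
        \<longrightarrow> A s t = A s' t')"

definition alg :: "'v set \<Rightarrow> ('v \<Rightarrow> nat) \<Rightarrow> 'v set \<Rightarrow> 'v op set" where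
  "alg V d S = {A. supported_on V d S A}"

definition support :: "'v set \<Rightarrow> ('v \<Rightarrow> nat) \<Rightarrow> 'v op \<Rightarrow> 'v set" where
  "support V d A = \<Inter>{S. S \<subseteq> V \<and> supported_on V d S A}"

definition within_dist :: "'v set \<Rightarrow> ('v \<Rightarrow> 'v \<Rightarrow> bool) \<Rightarrow> nat \<Rightarrow> 'v \<Rightarrow> 'v \<Rightarrow> bool" where
  "within_dist V E r x y \<longleftrightarrow>
     (x, y) \<in> ({(a, b). a \<in> V \<and> b \<in> V \<and> E a b} \<union> Id_on V) ^^ r"

definition ball :: "'v set \<Rightarrow> ('v \<Rightarrow> 'v \<Rightarrow> bool) \<Rightarrow> nat \<Rightarrow> 'v \<Rightarrow> 'v set" where
  "ball V E r x = {y. within_dist V E r x y}"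

definition is_star_automorphism :: "'v set \<Rightarrow> ('v \<Rightarrow> nat) \<Rightarrow> ('v op \<Rightarrow> 'v op) \<Rightarrow> bool" where
  "is_star_automorphism V d \<alpha> \<longleftrightarrow> bij_betw \<alpha> (ops V d) (ops V d) \<and>
     (\<forall>A\<in>ops V d. \<forall>B\<in>ops V d.
        \<alpha> (opadd A B) = opadd (\<alpha> A) (\<alpha> B) \<and>
        \<alpha> (opmult V d A B) = opmult V d (\<alpha> A) (\<alpha> B)) \<and>
     (\<forall>c. \<forall>A\<in>ops V d. \<alpha> (opscale c A) = opscale c (\<alpha> A)) \<and>
     (\<forall>A\<in>ops V d. \<alpha> (opadj A) = opadj (\<alpha> A))"

definition is_QCA :: "'v set \<Rightarrow> ('v \<Rightarrow> nat) \<Rightarrow> ('v \<Rightarrow> 'v \<Rightarrow> bool) \<Rightarrow> nat \<Rightarrow> ('v op \<Rightarrow> 'v op) \<Rightarrow> bool" where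
  "is_QCA V d E R \<alpha> \<longleftrightarrow> is_star_automorphism V d \<alpha> \<and>
     (\<forall>x\<in>V. \<forall>Q. supported_on V d {x} Q \<longrightarrow> supported_on V d (ball V E R x) (\<alpha> Q))"

definition interior_R :: "'v set \<Rightarrow> ('v \<Rightarrow> 'v \<Rightarrow> bool) \<Rightarrow> nat \<Rightarrow> 'v set \<Rightarrow> 'v set" where
  "interior_R V E R F = {x \<in> V. ball V E R x \<subseteq> F}"

definition P_alg :: "'v set \<Rightarrow> ('v \<Rightarrow> nat) \<Rightarrow> ('v \<Rightarrow> 'v \<Rightarrow> bool) \<Rightarrow> nat \<Rightarrow> ('v op \<Rightarrow> 'v op) \<Rightarrow> 'v set \<Rightarrow> 'v op set" where
  "P_alg V d E R \<alpha> F = {Q \<in> \<alpha> ` alg V d F.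
     \<forall>P\<in>alg V d (interior_R V E R F). opmult V d Q P = opmult V d P Q}"

definition star_subalgebra :: "'v set \<Rightarrow> ('v \<Rightarrow> nat) \<Rightarrow> 'v op set \<Rightarrow> bool" where
  "star_subalgebra V d Alg \<longleftrightarrow> Alg \<subseteq> ops V d \<and> opid V d \<in> Alg \<and>
     (\<forall>A\<in>Alg. \<forall>B\<in>Alg. opadd A B \<in> Alg \<and> opmult V d A B \<in> Alg) \<and>
     (\<forall>c. \<forall>A\<in>Alg. opscale c A \<in> Alg) \<and> (\<forall>A\<in>Alg. opadj A \<in> Alg)"

definition visibly_simple :: "'v set \<Rightarrow> ('v \<Rightarrow> nat) \<Rightarrow> ('v \<Rightarrow> 'v \<Rightarrow> bool) \<Rightarrow> nat \<Rightarrow> 'v op set \<Rightarrow> bool" where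
  "visibly_simple V d E l Alg \<longleftrightarrow>
     (\<forall>Q\<in>Alg. \<forall>x\<in>support V d Q. \<exists>P\<in>Alg.
        supported_on V d (ball V E l x) P \<and> opmult V d Q P \<noteq> opmult V d P Q)"

end

theory Submission
  imports Defs
begin


definition mix :: "'v set \<Rightarrow> ('v \<Rightarrow> nat) \<Rightarrow> ('v \<Rightarrow> nat) \<Rightarrow> ('v \<Rightarrow> nat)" where
  "mix S a b = (\<lambda>x. if x \<in> S then a x else b x)"

definition zop :: "'v op" where "zop = (\<lambda>s t. 0)"

definition opsum :: "'i set \<Rightarrow> ('i \<Rightarrow> 'v op) \<Rightarrow> 'v op" where
  "opsum K f = (\<lambda>s t. \<Sum>i\<in>K. f i s t)"

definition emu :: "'v set \<Rightarrow> ('v \<Rightarrow> nat) \<Rightarrow> 'v set \<Rightarrow> ('v \<Rightarrow> nat) \<Rightarrow> ('v \<Rightarrow> nat) \<Rightarrow> 'v op" where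
  "emu V d T \<sigma> \<tau> = (\<lambda>s t. if s \<in> confs V d \<and> t \<in> confs V d \<and> (\<forall>x\<in>T. s x = \<sigma> x \<and> t x = \<tau> x)
      \<and> (\<forall>x\<in>V - T. s x = t x) then 1 else 0)"

lemma finite_confs: assumes "finite V" shows "finite (confs V d)"
proof -
  define M where "M = Max (insert 0 (d ` V))"
  have dM: "d x \<le> M" if "x \<in> V" for x
    unfolding M_def using assms that by (intro Max_ge) auto
  have "confs V d \<subseteq> {f. \<forall>x. (x \<in> V \<longrightarrow> f x \<in> {..<M}) \<and> (x \<notin> V \<longrightarrow> f x = 0)}"
  proof
    fix s assume s: "s \<in> confs V d"
    have "s x \<in> {..<M}" if "x \<in> V" for x
    proof -
      have "s x < d x" using s that unfolding confs_def by blast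
      then show ?thesis using dM[OF that] by simp
    qed
    moreover have "s x = 0" if "x \<notin> V" for x using s that unfolding confs_def by blast
    ultimately show "s \<in> {f. \<forall>x. (x \<in> V \<longrightarrow> f x \<in> {..<M}) \<and> (x \<notin> V \<longrightarrow> f x = 0)}"
      by blast
  qed
  moreover have "finite {f. \<forall>x. (x \<in> V \<longrightarrow> f x \<in> {..<M}) \<and> (x \<notin> V \<longrightarrow> f x = (0::nat))}"
    by (rule finite_set_of_finite_funs) (use assms in auto)
  ultimately show ?thesis by (rule finite_subset)
qed

lemma confs_eqI: assumes "s \<in> confs V d" "t \<in> confs V d" "\<And>x. x \<in> V \<Longrightarrow> s x = t x" shows "s = t"
proof
  fix x show "s x = t x" using assms unfolding confs_def by (cases "x \<in> V") auto
qed

lemma mix_confs: "a \<in> confs V d \<Longrightarrow> b \<in> confs V d \<Longrightarrow> mix S a b \<in> confs V d"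
  unfolding confs_def mix_def by auto

lemma confs_sub: assumes "T \<subseteq> V" "\<forall>x\<in>V. d x > 0" "\<sigma> \<in> confs T d" shows "\<sigma> \<in> confs V d"
  using assms unfolding confs_def by auto

lemma sum_collapse:
  assumes "finite A" "w \<in> A" "\<And>u. u \<in> A \<Longrightarrow> u \<noteq> w \<Longrightarrow> f u = 0"
  shows "sum f A = f w"
proof -
  have "sum f A = f w + sum f (A - {w})" using assms by (simp add: sum.remove)
  also have "sum f (A - {w}) = 0" using assms by (intro sum.neutral) auto
  finally show ?thesis by simp
qed

lemma supported_onI:
  assumes "A \<in> ops V d"
    "\<And>s t x. s \<in> confs V d \<Longrightarrow> t \<in> confs V d \<Longrightarrow> x \<in> V \<Longrightarrow> x \<notin> S \<Longrightarrow> s x \<noteq> t x \<Longrightarrow> A s t = 0"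
    "\<And>s t s' t'. s \<in> confs V d \<Longrightarrow> t \<in> confs V d \<Longrightarrow> s' \<in> confs V d \<Longrightarrow> t' \<in> confs V d \<Longrightarrow>
       (\<And>x. x \<in> S \<Longrightarrow> s x = s' x) \<Longrightarrow> (\<And>x. x \<in> S \<Longrightarrow> t x = t' x) \<Longrightarrow>
       (\<And>x. x \<in> V \<Longrightarrow> x \<notin> S \<Longrightarrow> s x = t x) \<Longrightarrow> (\<And>x. x \<in> V \<Longrightarrow> x \<notin> S \<Longrightarrow> s' x = t' x) \<Longrightarrow> A s t = A s' t'"
  shows "supported_on V d S A"
  unfolding supported_on_def using assms by blast

lemma supp_ops: "supported_on V d S A \<Longrightarrow> A \<in> ops V d"
  unfolding supported_on_def by blast

lemma supp_zero: "supported_on V d S A \<Longrightarrow> s \<in> confs V d \<Longrightarrow> t \<in> confs V d \<Longrightarrow> x \<in> V \<Longrightarrow> x \<notin> S \<Longrightarrow> s x \<noteq> t x \<Longrightarrow> A s t = 0"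
  unfolding supported_on_def by blast

lemma supp_inv: "supported_on V d S A \<Longrightarrow> s \<in> confs V d \<Longrightarrow> t \<in> confs V d \<Longrightarrow> s' \<in> confs V d \<Longrightarrow> t' \<in> confs V d \<Longrightarrow>
       (\<And>x. x \<in> S \<Longrightarrow> s x = s' x) \<Longrightarrow> (\<And>x. x \<in> S \<Longrightarrow> t x = t' x) \<Longrightarrow>
       (\<And>x. x \<in> V \<Longrightarrow> x \<notin> S \<Longrightarrow> s x = t x) \<Longrightarrow> (\<And>x. x \<in> V \<Longrightarrow> x \<notin> S \<Longrightarrow> s' x = t' x) \<Longrightarrow> A s t = A s' t'"
proof -
  assume h: "supported_on V d S A" and c: "s \<in> confs V d" "t \<in> confs V d" "s' \<in> confs V d" "t' \<in> confs V d"
    and e1: "\<And>x. x \<in> S \<Longrightarrow> s x = s' x" and e2: "\<And>x. x \<in> S \<Longrightarrow> t x = t' x"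
    and e3: "\<And>x. x \<in> V \<Longrightarrow> x \<notin> S \<Longrightarrow> s x = t x" and e4: "\<And>x. x \<in> V \<Longrightarrow> x \<notin> S \<Longrightarrow> s' x = t' x"
  from h have "\<forall>s\<in>confs V d. \<forall>t\<in>confs V d. \<forall>s'\<in>confs V d. \<forall>t'\<in>confs V d.
        (\<forall>x\<in>S. s x = s' x \<and> t x = t' x) \<and> (\<forall>x\<in>V - S. s x = t x \<and> s' x = t' x)
        \<longrightarrow> A s t = A s' t'" unfolding supported_on_def by blast
  then have "(\<forall>x\<in>S. s x = s' x \<and> t x = t' x) \<and> (\<forall>x\<in>V - S. s x = t x \<and> s' x = t' x)
        \<longrightarrow> A s t = A s' t'" using c by blast
  moreover have "(\<forall>x\<in>S. s x = s' x \<and> t x = t' x) \<and> (\<forall>x\<in>V - S. s x = t x \<and> s' x = t' x)"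
    using e1 e2 e3 e4 by blast
  ultimately show "A s t = A s' t'" by blast
qed

lemma opsD: "A \<in> ops V d \<Longrightarrow> s \<notin> confs V d \<or> t \<notin> confs V d \<Longrightarrow> A s t = 0"
  unfolding ops_def by blast

lemma supp_V: assumes "A \<in> ops V d" shows "supported_on V d V A"
proof (rule supported_onI[OF assms])
  fix s t s' t' assume "s \<in> confs V d" "t \<in> confs V d" "s' \<in> confs V d" "t' \<in> confs V d"
    "\<And>x. x \<in> V \<Longrightarrow> s x = s' x" "\<And>x. x \<in> V \<Longrightarrow> t x = t' x"
  then have "s = s'" "t = t'" by (auto intro: confs_eqI)
  then show "A s t = A s' t'" by simp
qed auto

lemma supp_mono: assumes "supported_on V d S A" "S \<subseteq> S'" shows "supported_on V d S' A"
proof (rule supported_onI)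
  show "A \<in> ops V d" using assms supp_ops by blast
next
  fix s t x assume "s \<in> confs V d" "t \<in> confs V d" "x \<in> V" "x \<notin> S'" "s x \<noteq> t x"
  then show "A s t = 0" using assms supp_zero[OF assms(1)] by blast
next
  fix s t s' t' assume a: "s \<in> confs V d" "t \<in> confs V d" "s' \<in> confs V d" "t' \<in> confs V d"
    "\<And>x. x \<in> S' \<Longrightarrow> s x = s' x" "\<And>x. x \<in> S' \<Longrightarrow> t x = t' x"
    "\<And>x. x \<in> V \<Longrightarrow> x \<notin> S' \<Longrightarrow> s x = t x" "\<And>x. x \<in> V \<Longrightarrow> x \<notin> S' \<Longrightarrow> s' x = t' x"
  show "A s t = A s' t'"
  proof (cases "\<exists>x\<in>V. x \<notin> S \<and> s x \<noteq> t x")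
    case True
    then obtain x where x: "x \<in> V" "x \<notin> S" "s x \<noteq> t x" by blast
    then have "x \<in> S'" using a by blast
    then have "s' x \<noteq> t' x" using a(5,6)[of x] x(3) by simp
    then show ?thesis using supp_zero[OF assms(1)] a x by metis
  next
    case False
    have "s' x = t' x" if "x \<in> V" "x \<notin> S" for x
    proof -
      have "s x = t x" using False that by blast
      then show ?thesis using a(5,6,7,8)[of x] that by (cases "x \<in> S'") auto
    qed
    then show ?thesis using False a assms by (intro supp_inv[OF assms(1)]) auto
  qed
qed

lemma supp_inter: assumes "supported_on V d S1 A" "supported_on V d S2 A"
  shows "supported_on V d (S1 \<inter> S2) A"
proof (rule supported_onI)
  show "A \<in> ops V d" using assms supp_ops by blast
next
  fix s t x assume "s \<in> confs V d" "t \<in> confs V d" "x \<in> V" "x \<notin> S1 \<inter> S2" "s x \<noteq> t x"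
  then show "A s t = 0" using supp_zero[OF assms(1)] supp_zero[OF assms(2)] by blast
next
  fix s t s' t' assume a: "s \<in> confs V d" "t \<in> confs V d" "s' \<in> confs V d" "t' \<in> confs V d"
    "\<And>x. x \<in> S1 \<inter> S2 \<Longrightarrow> s x = s' x" "\<And>x. x \<in> S1 \<inter> S2 \<Longrightarrow> t x = t' x"
    "\<And>x. x \<in> V \<Longrightarrow> x \<notin> S1 \<inter> S2 \<Longrightarrow> s x = t x" "\<And>x. x \<in> V \<Longrightarrow> x \<notin> S1 \<inter> S2 \<Longrightarrow> s' x = t' x"
  define p where "p = mix S1 s s'"
  define q where "q = mix S1 t t'"
  have pq: "p \<in> confs V d" "q \<in> confs V d" using a by (auto simp: p_def q_def mix_confs)
  have "A s t = A p q"
    by (rule supp_inv[OF assms(1) a(1,2) pq]) (use a in \<open>auto simp: p_def q_def mix_def\<close>)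
  also have "\<dots> = A s' t'"
    by (rule supp_inv[OF assms(2) pq a(3,4)]) (use a in \<open>auto simp: p_def q_def mix_def\<close>)
  finally show "A s t = A s' t'" .
qed



lemma opmult_assoc: "opmult V d (opmult V d A B) C = opmult V d A (opmult V d B C)"
  unfolding opmult_def
  by (auto simp: sum_distrib_left sum_distrib_right mult.assoc intro!: ext) (rule sum.swap)

lemma opmult_ops: "A \<in> ops V d \<Longrightarrow> B \<in> ops V d \<Longrightarrow> opmult V d A B \<in> ops V d"
  unfolding ops_def opmult_def by auto

lemma opadd_ops: "A \<in> ops V d \<Longrightarrow> B \<in> ops V d \<Longrightarrow> opadd A B \<in> ops V d"
  unfolding ops_def opadd_def by auto

lemma opscale_ops: "A \<in> ops V d \<Longrightarrow> opscale c A \<in> ops V d"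
  unfolding ops_def opscale_def by auto

lemma opadj_ops: "A \<in> ops V d \<Longrightarrow> opadj A \<in> ops V d"
  unfolding ops_def opadj_def by auto

lemma zop_ops: "zop \<in> ops V d" unfolding ops_def zop_def by auto

lemma opid_ops: "opid V d \<in> ops V d" unfolding ops_def opid_def by auto

lemma opsum_ops: "(\<And>i. i \<in> K \<Longrightarrow> f i \<in> ops V d) \<Longrightarrow> opsum K f \<in> ops V d"
  unfolding ops_def opsum_def by auto

lemma opid_left: assumes "finite V" "A \<in> ops V d" shows "opmult V d (opid V d) A = A"
proof (intro ext)
  fix s t
  show "opmult V d (opid V d) A s t = A s t"
  proof (cases "s \<in> confs V d")
    case True
    have "opmult V d (opid V d) A s t = opid V d s s * A s t"
      unfolding opmult_def by (rule sum_collapse[OF finite_confs[OF assms(1)] True]) (auto simp: opid_def)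
    then show ?thesis using True by (simp add: opid_def)
  next
    case False
    then show ?thesis using assms(2) by (simp add: opmult_def opid_def opsD)
  qed
qed

lemma opid_right: assumes "finite V" "A \<in> ops V d" shows "opmult V d A (opid V d) = A"
proof (intro ext)
  fix s t
  show "opmult V d A (opid V d) s t = A s t"
  proof (cases "t \<in> confs V d")
    case True
    have "opmult V d A (opid V d) s t = A s t * opid V d t t"
      unfolding opmult_def by (rule sum_collapse[OF finite_confs[OF assms(1)] True]) (auto simp: opid_def)
    then show ?thesis using True by (simp add: opid_def)
  next
    case False
    then show ?thesis using assms(2) by (auto simp: opmult_def opid_def opsD intro!: sum.neutral)
  qed
qed

lemma opmult_opsum_right: "opmult V d A (opsum K f) = opsum K (\<lambda>i. opmult V d A (f i))"
  unfolding opmult_def opsum_def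
  by (auto simp: sum_distrib_left intro!: ext) (rule sum.swap)

lemma opmult_opsum_left: "opmult V d (opsum K f) A = opsum K (\<lambda>i. opmult V d (f i) A)"
  unfolding opmult_def opsum_def
  by (auto simp: sum_distrib_right intro!: ext) (rule sum.swap)

lemma opmult_add_right: "opmult V d A (opadd B C) = opadd (opmult V d A B) (opmult V d A C)"
  unfolding opmult_def opadd_def by (auto simp: distrib_left sum.distrib intro!: ext)

lemma opmult_add_left: "opmult V d (opadd B C) A = opadd (opmult V d B A) (opmult V d C A)"
  unfolding opmult_def opadd_def by (auto simp: distrib_right sum.distrib intro!: ext)

lemma opmult_scale_right: "opmult V d A (opscale c B) = opscale c (opmult V d A B)"
  unfolding opmult_def opscale_def by (auto simp: sum_distrib_left intro!: ext sum.cong)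

lemma opmult_scale_left: "opmult V d (opscale c B) A = opscale c (opmult V d B A)"
  unfolding opmult_def opscale_def by (auto simp: sum_distrib_left intro!: ext sum.cong)

lemma opadj_mult: "opadj (opmult V d A B) = opmult V d (opadj B) (opadj A)"
  unfolding opmult_def opadj_def by (auto simp: mult.commute intro!: ext)

lemma opadj_opadj: "opadj (opadj A) = A" unfolding opadj_def by auto

lemma emu_left:
  assumes "finite V" "\<tau> \<in> confs V d"
  shows "opmult V d (emu V d T \<sigma> \<tau>) Y s t =
    (if s \<in> confs V d \<and> (\<forall>x\<in>T. s x = \<sigma> x) then Y (mix T \<tau> s) t else 0)"
proof (cases "s \<in> confs V d \<and> (\<forall>x\<in>T. s x = \<sigma> x)")
  case True
  have w: "mix T \<tau> s \<in> confs V d" using True assms mix_confs by blast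
  have "opmult V d (emu V d T \<sigma> \<tau>) Y s t = emu V d T \<sigma> \<tau> s (mix T \<tau> s) * Y (mix T \<tau> s) t"
    unfolding opmult_def
  proof (rule sum_collapse[OF finite_confs[OF assms(1)] w])
    fix u assume u: "u \<in> confs V d" "u \<noteq> mix T \<tau> s"
    have "emu V d T \<sigma> \<tau> s u = 0"
    proof (rule ccontr)
      assume "emu V d T \<sigma> \<tau> s u \<noteq> 0"
      then have h: "\<forall>x\<in>T. u x = \<tau> x" "\<forall>x\<in>V - T. s x = u x" unfolding emu_def by (auto split: if_splits)
      have "u = mix T \<tau> s" by (rule confs_eqI[OF u(1) w]) (use h in \<open>auto simp: mix_def\<close>)
      then show False using u by simp
    qed
    then show "emu V d T \<sigma> \<tau> s u * Y u t = 0" by simp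
  qed
  also have "emu V d T \<sigma> \<tau> s (mix T \<tau> s) = 1" using True w unfolding emu_def by (auto simp: mix_def)
  finally show ?thesis using True by simp
next
  case False
  then show ?thesis unfolding opmult_def emu_def by (auto intro!: sum.neutral)
qed

lemma emu_right:
  assumes "finite V" "\<sigma> \<in> confs V d"
  shows "opmult V d Y (emu V d T \<sigma> \<tau>) s t =
    (if t \<in> confs V d \<and> (\<forall>x\<in>T. t x = \<tau> x) then Y s (mix T \<sigma> t) else 0)"
proof (cases "t \<in> confs V d \<and> (\<forall>x\<in>T. t x = \<tau> x)")
  case True
  have w: "mix T \<sigma> t \<in> confs V d" using True assms mix_confs by blast
  have "opmult V d Y (emu V d T \<sigma> \<tau>) s t = Y s (mix T \<sigma> t) * emu V d T \<sigma> \<tau> (mix T \<sigma> t) t"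
    unfolding opmult_def
  proof (rule sum_collapse[OF finite_confs[OF assms(1)] w])
    fix u assume u: "u \<in> confs V d" "u \<noteq> mix T \<sigma> t"
    have "emu V d T \<sigma> \<tau> u t = 0"
    proof (rule ccontr)
      assume "emu V d T \<sigma> \<tau> u t \<noteq> 0"
      then have h: "\<forall>x\<in>T. u x = \<sigma> x" "\<forall>x\<in>V - T. u x = t x" unfolding emu_def by (auto split: if_splits)
      have "u = mix T \<sigma> t" by (rule confs_eqI[OF u(1) w]) (use h in \<open>auto simp: mix_def\<close>)
      then show False using u by simp
    qed
    then show "Y s u * emu V d T \<sigma> \<tau> u t = 0" by simp
  qed
  also have "emu V d T \<sigma> \<tau> (mix T \<sigma> t) t = 1" using True w unfolding emu_def by (auto simp: mix_def)
  finally show ?thesis using True by simp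
next
  case False
  then show ?thesis unfolding opmult_def emu_def by (auto intro!: sum.neutral)
qed

lemma emu_supp: assumes "T \<subseteq> V" shows "supported_on V d T (emu V d T \<sigma> \<tau>)"
proof (rule supported_onI)
  show "emu V d T \<sigma> \<tau> \<in> ops V d" unfolding ops_def emu_def by auto
next
  fix s t :: "_ \<Rightarrow> nat" and x assume "x \<in> V" "x \<notin> T" "s x \<noteq> t x"
  then show "emu V d T \<sigma> \<tau> s t = 0" unfolding emu_def by auto
next
  fix s t s' t' assume a: "s \<in> confs V d" "t \<in> confs V d" "s' \<in> confs V d" "t' \<in> confs V d"
    "\<And>x. x \<in> T \<Longrightarrow> s x = s' x" "\<And>x. x \<in> T \<Longrightarrow> t x = t' x"
    "\<And>x. x \<in> V \<Longrightarrow> x \<notin> T \<Longrightarrow> s x = t x" "\<And>x. x \<in> V \<Longrightarrow> x \<notin> T \<Longrightarrow> s' x = t' x"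
  then show "emu V d T \<sigma> \<tau> s t = emu V d T \<sigma> \<tau> s' t'" unfolding emu_def by auto
qed

lemma commutant_thm:
  assumes fin: "finite V" and TV: "T \<subseteq> V" and Y: "Y \<in> ops V d"
    and comm: "\<And>\<sigma> \<tau>. \<sigma> \<in> confs V d \<Longrightarrow> \<tau> \<in> confs V d \<Longrightarrow>
       opmult V d (emu V d T \<sigma> \<tau>) Y = opmult V d Y (emu V d T \<sigma> \<tau>)"
  shows "supported_on V d (V - T) Y"
proof -
  have key: "(if q \<in> confs V d \<and> (\<forall>x\<in>T. q x = \<tau> x) then Y p (mix T \<sigma> q) else 0) =
             (if p \<in> confs V d \<and> (\<forall>x\<in>T. p x = \<sigma> x) then Y (mix T \<tau> p) q else 0)"
    if "\<sigma> \<in> confs V d" "\<tau> \<in> confs V d" for p q \<sigma> \<tau>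
    using comm[OF that] emu_left[OF fin that(2), of T \<sigma> Y p q] emu_right[OF fin that(1), of Y T \<tau> p q]
    by metis
  show ?thesis
  proof (rule supported_onI[OF Y])
    fix s t x assume a: "s \<in> confs V d" "t \<in> confs V d" "x \<in> V" "x \<notin> V - T" "s x \<noteq> t x"
    have "mix T t t = t" by (simp add: mix_def)
    then show "Y s t = 0" using key[OF a(2) a(2), of t s] a by auto
  next
    fix s t s' t' assume a: "s \<in> confs V d" "t \<in> confs V d" "s' \<in> confs V d" "t' \<in> confs V d"
      "\<And>x. x \<in> V - T \<Longrightarrow> s x = s' x" "\<And>x. x \<in> V - T \<Longrightarrow> t x = t' x"
      "\<And>x. x \<in> V \<Longrightarrow> x \<notin> V - T \<Longrightarrow> s x = t x" "\<And>x. x \<in> V \<Longrightarrow> x \<notin> V - T \<Longrightarrow> s' x = t' x"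
    have m1: "mix T s t' = t"
      by (rule confs_eqI[OF mix_confs[OF a(1,4)] a(2)]) (use a TV in \<open>auto simp: mix_def\<close>)
    have m2: "mix T t' s = s'"
      by (rule confs_eqI[OF mix_confs[OF a(4,1)] a(3)]) (use a TV in \<open>auto simp: mix_def\<close>)
    show "Y s t = Y s' t'" using key[OF a(1) a(4), of t' s] a m1 m2 by auto
  qed
qed

lemma disjoint_commute:
  assumes fin: "finite V" and dis: "S1 \<inter> S2 = {}"
    and A: "supported_on V d S1 A" and B: "supported_on V d S2 B"
  shows "opmult V d A B = opmult V d B A"
proof (intro ext)
  fix s t
  have Ao: "A \<in> ops V d" and Bo: "B \<in> ops V d" using A B supp_ops by blast+
  show "opmult V d A B s t = opmult V d B A s t"
  proof (cases "s \<in> confs V d \<and> t \<in> confs V d")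
    case False
    then show ?thesis using Ao Bo by (auto simp: opmult_def opsD)
  next
    case True
    then have s: "s \<in> confs V d" and t: "t \<in> confs V d" by auto
    define w where "w = mix S1 t s"
    define w' where "w' = mix S2 t s"
    have w: "w \<in> confs V d" "w' \<in> confs V d" unfolding w_def w'_def using s t mix_confs by blast+
    have e1: "opmult V d A B s t = A s w * B w t"
      unfolding opmult_def
    proof (rule sum_collapse[OF finite_confs[OF fin] w(1)])
      fix u assume u: "u \<in> confs V d" "u \<noteq> w"
      then obtain x where x: "x \<in> V" "u x \<noteq> w x" using confs_eqI[OF u(1) w(1)] by blast
      show "A s u * B u t = 0"
      proof (cases "x \<in> S1")
        case True
        then have "x \<notin> S2" "u x \<noteq> t x" using dis x by (auto simp: w_def mix_def)
        then show ?thesis using supp_zero[OF B u(1) t x(1)] by simp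
      next
        case False
        then have "s x \<noteq> u x" using x by (auto simp: w_def mix_def)
        then show ?thesis using supp_zero[OF A s u(1) x(1) False] by simp
      qed
    qed
    have e2: "opmult V d B A s t = B s w' * A w' t"
      unfolding opmult_def
    proof (rule sum_collapse[OF finite_confs[OF fin] w(2)])
      fix u assume u: "u \<in> confs V d" "u \<noteq> w'"
      then obtain x where x: "x \<in> V" "u x \<noteq> w' x" using confs_eqI[OF u(1) w(2)] by blast
      show "B s u * A u t = 0"
      proof (cases "x \<in> S2")
        case True
        then have "x \<notin> S1" "u x \<noteq> t x" using dis x by (auto simp: w'_def mix_def)
        then show ?thesis using supp_zero[OF A u(1) t x(1)] by simp
      next
        case False
        then have "s x \<noteq> u x" using x by (auto simp: w'_def mix_def)
        then show ?thesis using supp_zero[OF B s u(1) x(1) False] by simp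
      qed
    qed
    show ?thesis
    proof (cases "\<exists>z\<in>V. z \<notin> S1 \<and> z \<notin> S2 \<and> s z \<noteq> t z")
      case True
      then obtain z where z: "z \<in> V" "z \<notin> S1" "z \<notin> S2" "s z \<noteq> t z" by blast
      have "B w t = 0" by (rule supp_zero[OF B w(1) t z(1) z(3)]) (use z in \<open>simp add: w_def mix_def\<close>)
      moreover have "A w' t = 0" by (rule supp_zero[OF A w(2) t z(1) z(2)]) (use z in \<open>simp add: w'_def mix_def\<close>)
      ultimately show ?thesis using e1 e2 by simp
    next
      case False
      have "A s w = A w' t"
        by (rule supp_inv[OF A s w(1) w(2) t]) (use False dis in \<open>auto simp: w_def w'_def mix_def\<close>)
      moreover have "B w t = B s w'"
        by (rule supp_inv[OF B w(1) t s w(2)]) (use False dis in \<open>auto simp: w_def w'_def mix_def\<close>)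
      ultimately show ?thesis using e1 e2 by simp
    qed
  qed
qed



lemma supp_add: assumes "supported_on V d S A" "supported_on V d S B"
  shows "supported_on V d S (opadd A B)"
proof (rule supported_onI)
  show "opadd A B \<in> ops V d" using assms supp_ops opadd_ops by blast
next
  fix s t x assume "s \<in> confs V d" "t \<in> confs V d" "x \<in> V" "x \<notin> S" "s x \<noteq> t x"
  then show "opadd A B s t = 0" using supp_zero[OF assms(1)] supp_zero[OF assms(2)] by (simp add: opadd_def)
next
  fix s t s' t' assume a: "s \<in> confs V d" "t \<in> confs V d" "s' \<in> confs V d" "t' \<in> confs V d"
    "\<And>x. x \<in> S \<Longrightarrow> s x = s' x" "\<And>x. x \<in> S \<Longrightarrow> t x = t' x"
    "\<And>x. x \<in> V \<Longrightarrow> x \<notin> S \<Longrightarrow> s x = t x" "\<And>x. x \<in> V \<Longrightarrow> x \<notin> S \<Longrightarrow> s' x = t' x"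
  show "opadd A B s t = opadd A B s' t'"
    using supp_inv[OF assms(1) a] supp_inv[OF assms(2) a] by (simp add: opadd_def)
qed

lemma supp_scale: assumes "supported_on V d S A"
  shows "supported_on V d S (opscale c A)"
proof (rule supported_onI)
  show "opscale c A \<in> ops V d" using assms supp_ops opscale_ops by blast
next
  fix s t x assume "s \<in> confs V d" "t \<in> confs V d" "x \<in> V" "x \<notin> S" "s x \<noteq> t x"
  then show "opscale c A s t = 0" using supp_zero[OF assms(1)] by (simp add: opscale_def)
next
  fix s t s' t' assume a: "s \<in> confs V d" "t \<in> confs V d" "s' \<in> confs V d" "t' \<in> confs V d"
    "\<And>x. x \<in> S \<Longrightarrow> s x = s' x" "\<And>x. x \<in> S \<Longrightarrow> t x = t' x"
    "\<And>x. x \<in> V \<Longrightarrow> x \<notin> S \<Longrightarrow> s x = t x" "\<And>x. x \<in> V \<Longrightarrow> x \<notin> S \<Longrightarrow> s' x = t' x"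
  show "opscale c A s t = opscale c A s' t'"
    using supp_inv[OF assms(1) a] by (simp add: opscale_def)
qed

lemma supp_adj: assumes "supported_on V d S A"
  shows "supported_on V d S (opadj A)"
proof (rule supported_onI)
  show "opadj A \<in> ops V d" using assms supp_ops opadj_ops by blast
next
  fix s t x assume "s \<in> confs V d" "t \<in> confs V d" "x \<in> V" "x \<notin> S" "s x \<noteq> t x"
  then show "opadj A s t = 0" using supp_zero[OF assms(1), of t s x] by (simp add: opadj_def)
next
  fix s t s' t' assume a: "s \<in> confs V d" "t \<in> confs V d" "s' \<in> confs V d" "t' \<in> confs V d"
    "\<And>x. x \<in> S \<Longrightarrow> s x = s' x" "\<And>x. x \<in> S \<Longrightarrow> t x = t' x"
    "\<And>x. x \<in> V \<Longrightarrow> x \<notin> S \<Longrightarrow> s x = t x" "\<And>x. x \<in> V \<Longrightarrow> x \<notin> S \<Longrightarrow> s' x = t' x"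
  have "A t s = A t' s'" by (rule supp_inv[OF assms(1) a(2,1,4,3)]) (use a in auto)
  then show "opadj A s t = opadj A s' t'" by (simp add: opadj_def)
qed

lemma supp_opid: "supported_on V d S (opid V d)"
proof (rule supported_onI)
  show "opid V d \<in> ops V d" by (rule opid_ops)
next
  fix s t :: "_ \<Rightarrow> nat" and x assume "s \<in> confs V d" "t \<in> confs V d" "x \<in> V" "x \<notin> S" "s x \<noteq> t x"
  then show "opid V d s t = 0" by (auto simp: opid_def)
next
  fix s t s' t' assume a: "s \<in> confs V d" "t \<in> confs V d" "s' \<in> confs V d" "t' \<in> confs V d"
    "\<And>x. x \<in> S \<Longrightarrow> s x = s' x" "\<And>x. x \<in> S \<Longrightarrow> t x = t' x"
    "\<And>x. x \<in> V \<Longrightarrow> x \<notin> S \<Longrightarrow> s x = t x" "\<And>x. x \<in> V \<Longrightarrow> x \<notin> S \<Longrightarrow> s' x = t' x"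
  have "s = t \<longleftrightarrow> s' = t'"
  proof
    assume "s = t"
    show "s' = t'" by (rule confs_eqI[OF a(3,4)]) (use a \<open>s = t\<close> in metis)
  next
    assume "s' = t'"
    show "s = t" by (rule confs_eqI[OF a(1,2)]) (use a \<open>s' = t'\<close> in metis)
  qed
  then show "opid V d s t = opid V d s' t'" using a by (simp add: opid_def)
qed

lemma supp_zop: "supported_on V d S zop"
  by (rule supported_onI) (auto simp: zop_def ops_def)

lemma supp_mult: assumes fin: "finite V" and SV: "S \<subseteq> V"
  and A: "supported_on V d S A" and B: "supported_on V d S B"
  shows "supported_on V d S (opmult V d A B)"
proof -
  have Ao: "A \<in> ops V d" and Bo: "B \<in> ops V d" using A B supp_ops by blast+
  have "supported_on V d (V - (V - S)) (opmult V d A B)"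
  proof (rule commutant_thm[OF fin _ opmult_ops[OF Ao Bo]])
    fix \<sigma> \<tau> :: "_ \<Rightarrow> nat"
    let ?e = "emu V d (V - S) \<sigma> \<tau>"
    have es: "supported_on V d (V - S) ?e" by (rule emu_supp) auto
    have c1: "opmult V d ?e A = opmult V d A ?e" by (rule disjoint_commute[OF fin _ es A]) auto
    have c2: "opmult V d ?e B = opmult V d B ?e" by (rule disjoint_commute[OF fin _ es B]) auto
    show "opmult V d ?e (opmult V d A B) = opmult V d (opmult V d A B) ?e"
      by (metis opmult_assoc c1 c2)
  qed auto
  moreover have "V - (V - S) = S" using SV by blast
  ultimately show ?thesis by simp
qed

lemma comm_single_sites:
  assumes fin: "finite V" and Y: "Y \<in> ops V d" and YsV: "Ys \<subseteq> V"
    and comm: "\<And>y P. y \<in> Ys \<Longrightarrow> supported_on V d {y} P \<Longrightarrow> opmult V d Y P = opmult V d P Y"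
  shows "supported_on V d (V - Ys) Y"
proof -
  have single: "supported_on V d (V - {y}) Y" if "y \<in> Ys" for y
  proof (rule commutant_thm[OF fin _ Y])
    show "{y} \<subseteq> V" using that YsV by auto
  next
    fix \<sigma> \<tau> :: "_ \<Rightarrow> nat"
    have "supported_on V d {y} (emu V d {y} \<sigma> \<tau>)" by (rule emu_supp) (use that YsV in auto)
    then show "opmult V d (emu V d {y} \<sigma> \<tau>) Y = opmult V d Y (emu V d {y} \<sigma> \<tau>)"
      using comm[OF that] by metis
  qed
  have "finite Ys" using YsV fin finite_subset by blast
  then show ?thesis using single
  proof (induction Ys)
    case empty
    then show ?case using supp_V[OF Y] by simp
  next
    case (insert y Ys)
    have "supported_on V d ((V - Ys) \<inter> (V - {y})) Y"
      using insert by (intro supp_inter) auto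
    moreover have "(V - Ys) \<inter> (V - {y}) = V - insert y Ys" by blast
    ultimately show ?case by simp
  qed
qed

section \<open>Automorphism facts\<close>

lemma aut_bij: "is_star_automorphism V d \<alpha> \<Longrightarrow> bij_betw \<alpha> (ops V d) (ops V d)"
  unfolding is_star_automorphism_def by simp

lemma aut_ops: "is_star_automorphism V d \<alpha> \<Longrightarrow> A \<in> ops V d \<Longrightarrow> \<alpha> A \<in> ops V d"
proof -
  assume a: "is_star_automorphism V d \<alpha>" "A \<in> ops V d"
  show "\<alpha> A \<in> ops V d" by (rule bij_betw_apply[OF aut_bij[OF a(1)] a(2)])
qed

lemma aut_inj: "is_star_automorphism V d \<alpha> \<Longrightarrow> A \<in> ops V d \<Longrightarrow> B \<in> ops V d \<Longrightarrow> \<alpha> A = \<alpha> B \<Longrightarrow> A = B"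
proof -
  assume a: "is_star_automorphism V d \<alpha>" "A \<in> ops V d" "B \<in> ops V d" "\<alpha> A = \<alpha> B"
  have "inj_on \<alpha> (ops V d)" using aut_bij[OF a(1)] by (rule bij_betw_imp_inj_on)
  then show "A = B" using inj_onD a(2-4) by metis
qed

lemma aut_surj: assumes "is_star_automorphism V d \<alpha>" "B \<in> ops V d" shows "\<exists>A\<in>ops V d. \<alpha> A = B"
proof -
  have "\<alpha> ` ops V d = ops V d" using aut_bij[OF assms(1)] by (rule bij_betw_imp_surj_on)
  then have "B \<in> \<alpha> ` ops V d" using assms(2) by simp
  then show ?thesis by blast
qed

lemma aut_mult: "is_star_automorphism V d \<alpha> \<Longrightarrow> A \<in> ops V d \<Longrightarrow> B \<in> ops V d \<Longrightarrow>
   \<alpha> (opmult V d A B) = opmult V d (\<alpha> A) (\<alpha> B)"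
  unfolding is_star_automorphism_def by simp

lemma aut_add: "is_star_automorphism V d \<alpha> \<Longrightarrow> A \<in> ops V d \<Longrightarrow> B \<in> ops V d \<Longrightarrow>
   \<alpha> (opadd A B) = opadd (\<alpha> A) (\<alpha> B)"
  unfolding is_star_automorphism_def by simp

lemma aut_scale: "is_star_automorphism V d \<alpha> \<Longrightarrow> A \<in> ops V d \<Longrightarrow> \<alpha> (opscale c A) = opscale c (\<alpha> A)"
  unfolding is_star_automorphism_def by simp

lemma aut_adj: "is_star_automorphism V d \<alpha> \<Longrightarrow> A \<in> ops V d \<Longrightarrow> \<alpha> (opadj A) = opadj (\<alpha> A)"
  unfolding is_star_automorphism_def by simp

lemma aut_zop: assumes "is_star_automorphism V d \<alpha>" shows "\<alpha> zop = zop"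
proof -
  have "zop = opscale 0 (zop :: 'a op)" by (simp add: zop_def opscale_def)
  moreover have "\<alpha> (opscale 0 zop) = opscale 0 (\<alpha> zop)" using aut_scale[OF assms zop_ops] .
  ultimately have "\<alpha> zop = opscale 0 (\<alpha> zop)" by simp
  then show ?thesis by (simp add: opscale_def zop_def)
qed

lemma aut_opid: assumes aut: "is_star_automorphism V d \<alpha>" and fin: "finite V"
  shows "\<alpha> (opid V d) = opid V d"
proof -
  obtain A where A: "A \<in> ops V d" "\<alpha> A = opid V d" using aut_surj[OF aut opid_ops] by blast
  have "opid V d = \<alpha> (opmult V d (opid V d) A)" using opid_left[OF fin A(1)] A by simp
  also have "\<dots> = opmult V d (\<alpha> (opid V d)) (opid V d)" using aut_mult[OF aut opid_ops A(1)] A by simp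
  also have "\<dots> = \<alpha> (opid V d)" by (rule opid_right[OF fin aut_ops[OF aut opid_ops]])
  finally show ?thesis by simp
qed

section \<open>Balls\<close>

abbreviation grel :: "'v set \<Rightarrow> ('v \<Rightarrow> 'v \<Rightarrow> bool) \<Rightarrow> ('v \<times> 'v) set" where
  "grel V E \<equiv> {(a, b). a \<in> V \<and> b \<in> V \<and> E a b} \<union> Id_on V"

lemma relpow_sym:
  assumes rs: "\<forall>a b. (a, b) \<in> r \<longrightarrow> (b, a) \<in> r"
  shows "(x, y) \<in> r ^^ n \<Longrightarrow> (y, x) \<in> r ^^ n"
proof (induction n arbitrary: x y)
  case 0 then show ?case by simp
next
  case (Suc n)
  from Suc.prems obtain z where z: "(x, z) \<in> r ^^ n" "(z, y) \<in> r" by (rule relpow_Suc_E)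
  have "(y, z) \<in> r" using rs z(2) by blast
  moreover have "(z, x) \<in> r ^^ n" using Suc.IH z(1) .
  ultimately show ?case by (rule relpow_Suc_I2)
qed

lemma ball_sym: assumes sym: "\<forall>a b. E a b \<longrightarrow> E b a" and y: "y \<in> ball V E n x" shows "x \<in> ball V E n y"
proof -
  have rs: "\<forall>a b. (a, b) \<in> grel V E \<longrightarrow> (b, a) \<in> grel V E" using sym by auto
  have "(x, y) \<in> grel V E ^^ n" using y unfolding ball_def within_dist_def by simp
  then have "(y, x) \<in> grel V E ^^ n" by (rule relpow_sym[OF rs])
  then show ?thesis unfolding ball_def within_dist_def by simp
qed

lemma ball_trans: assumes "y \<in> ball V E m x" "z \<in> ball V E n y" shows "z \<in> ball V E (m + n) x"
proof -
  have "(x, y) \<in> grel V E ^^ m" "(y, z) \<in> grel V E ^^ n" using assms unfolding ball_def within_dist_def by simp_all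
  then have "(x, z) \<in> grel V E ^^ m O grel V E ^^ n" by (rule relcompI)
  then have "(x, z) \<in> grel V E ^^ (m + n)" by (simp only: relpow_add)
  then show ?thesis unfolding ball_def within_dist_def by simp
qed

lemma ball_self: assumes "x \<in> V" shows "x \<in> ball V E n x"
proof -
  have xx: "(x, x) \<in> grel V E" using assms by blast
  have "(x, x) \<in> grel V E ^^ n"
  proof (induction n)
    case 0 then show ?case by simp
  next
    case (Suc n)
    then show ?case using xx by (rule relpow_Suc_I)
  qed
  then show ?thesis unfolding ball_def within_dist_def by simp
qed



lemma pullback:
  assumes fin: "finite V" and aut: "is_star_automorphism V d \<alpha>"
    and loc: "\<forall>x\<in>V. \<forall>Q. supported_on V d {x} Q \<longrightarrow> supported_on V d (ball V E R x) (\<alpha> Q)"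
    and FV: "FF \<subseteq> V" and M: "supported_on V d I M"
    and far: "\<And>y. y \<in> V \<Longrightarrow> y \<notin> FF \<Longrightarrow> ball V E R y \<inter> I = {}"
  shows "\<exists>W. supported_on V d FF W \<and> \<alpha> W = M"
proof -
  have Mo: "M \<in> ops V d" using M supp_ops by blast
  obtain W where W: "W \<in> ops V d" "\<alpha> W = M" using aut_surj[OF aut Mo] by blast
  have "supported_on V d (V - (V - FF)) W"
  proof (rule comm_single_sites[OF fin W(1)])
    fix y P assume y: "y \<in> V - FF" and P: "supported_on V d {y} P"
    have Po: "P \<in> ops V d" using P supp_ops by blast
    have aP: "supported_on V d (ball V E R y) (\<alpha> P)" using loc y P by blast
    have c: "opmult V d M (\<alpha> P) = opmult V d (\<alpha> P) M"
      by (rule disjoint_commute[OF fin _ M aP]) (use far y in blast)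
    have "\<alpha> (opmult V d W P) = \<alpha> (opmult V d P W)"
      using aut_mult[OF aut W(1) Po] aut_mult[OF aut Po W(1)] W(2) c by simp
    then show "opmult V d W P = opmult V d P W"
      using aut_inj[OF aut opmult_ops[OF W(1) Po] opmult_ops[OF Po W(1)]] by blast
  qed auto
  moreover have "V - (V - FF) = FF" using FV by blast
  ultimately show ?thesis using W(2) by auto
qed

lemma image_alg_closed:
  assumes fin: "finite V" and aut: "is_star_automorphism V d \<alpha>" and FV: "F \<subseteq> V"
  shows "\<And>P Q. P \<in> \<alpha> ` alg V d F \<Longrightarrow> Q \<in> \<alpha> ` alg V d F \<Longrightarrow> opmult V d P Q \<in> \<alpha> ` alg V d F"
    and "\<And>P Q. P \<in> \<alpha> ` alg V d F \<Longrightarrow> Q \<in> \<alpha> ` alg V d F \<Longrightarrow> opadd P Q \<in> \<alpha> ` alg V d F"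
    and "zop \<in> \<alpha> ` alg V d F"
proof -
  fix P Q assume "P \<in> \<alpha> ` alg V d F" "Q \<in> \<alpha> ` alg V d F"
  then obtain A B where A: "supported_on V d F A" "P = \<alpha> A" and B: "supported_on V d F B" "Q = \<alpha> B"
    unfolding alg_def by blast
  have Ao: "A \<in> ops V d" and Bo: "B \<in> ops V d" using A B supp_ops by blast+
  have "opmult V d P Q = \<alpha> (opmult V d A B)" using aut_mult[OF aut Ao Bo] A B by simp
  moreover have "supported_on V d F (opmult V d A B)" by (rule supp_mult[OF fin FV A(1) B(1)])
  ultimately show "opmult V d P Q \<in> \<alpha> ` alg V d F" unfolding alg_def by blast
  have "opadd P Q = \<alpha> (opadd A B)" using aut_add[OF aut Ao Bo] A B by simp
  moreover have "supported_on V d F (opadd A B)" by (rule supp_add[OF A(1) B(1)])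
  ultimately show "opadd P Q \<in> \<alpha> ` alg V d F" unfolding alg_def by blast
next
  show "zop \<in> \<alpha> ` alg V d F" using aut_zop[OF aut] supp_zop unfolding alg_def by (metis image_eqI mem_Collect_eq)
qed

lemma opsum_closed:
  assumes "finite K" and "\<And>i. i \<in> K \<Longrightarrow> f i \<in> M" and "zop \<in> M"
    and "\<And>P Q. P \<in> M \<Longrightarrow> Q \<in> M \<Longrightarrow> opadd P Q \<in> M"
  shows "opsum K f \<in> M"
  using assms(1,2)
proof (induction K)
  case empty
  have "opsum {} f = zop" by (simp add: opsum_def zop_def)
  then show ?case using assms(3) by simp
next
  case (insert i K)
  have "opsum (insert i K) f = opadd (f i) (opsum K f)"
    using insert.hyps by (simp add: opsum_def opadd_def)
  then show ?case using insert assms(4) by simp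
qed

lemma opsum_cong: "(\<And>i. i \<in> K \<Longrightarrow> f i = g i) \<Longrightarrow> opsum K f = opsum K g"
  unfolding opsum_def by (auto intro!: ext sum.cong)

definition restr :: "'v set \<Rightarrow> ('v \<Rightarrow> nat) \<Rightarrow> ('v \<Rightarrow> nat)" where
  "restr I s = mix I s (\<lambda>_. 0)"

lemma restr_confs: "s \<in> confs V d \<Longrightarrow> I \<subseteq> V \<Longrightarrow> restr I s \<in> confs I d"
  unfolding restr_def mix_def confs_def by auto

lemma confsI_eq: assumes "\<sigma> \<in> confs I d" "\<tau> \<in> confs I d" "\<And>x. x \<in> I \<Longrightarrow> \<sigma> x = \<tau> x" shows "\<sigma> = \<tau>"
  by (rule confs_eqI[OF assms])

definition Pk :: "'v set \<Rightarrow> ('v \<Rightarrow> nat) \<Rightarrow> 'v set \<Rightarrow> 'v op \<Rightarrow> ('v \<Rightarrow> nat) \<Rightarrow> ('v \<Rightarrow> nat) \<Rightarrow> 'v op" where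
  "Pk V d I X \<kappa> \<mu> = opsum (confs I d) (\<lambda>\<sigma>. opmult V d (opmult V d (emu V d I \<sigma> \<kappa>) X) (emu V d I \<mu> \<sigma>))"

lemma Pk_entry:
  assumes fin: "finite V" and IV: "I \<subseteq> V" and dpos: "\<forall>x\<in>V. d x > 0"
    and k: "\<kappa> \<in> confs I d" and l: "\<mu> \<in> confs I d"
  shows "Pk V d I X \<kappa> \<mu> s t = (if s \<in> confs V d \<and> t \<in> confs V d \<and> (\<forall>x\<in>I. s x = t x)
      then X (mix I \<kappa> s) (mix I \<mu> t) else 0)"
proof -
  have kV: "\<kappa> \<in> confs V d" and lV: "\<mu> \<in> confs V d" using confs_sub[OF IV dpos] k l by blast+
  have trm: "opmult V d (opmult V d (emu V d I \<sigma> \<kappa>) X) (emu V d I \<mu> \<sigma>) s t =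
     (if s \<in> confs V d \<and> t \<in> confs V d \<and> (\<forall>x\<in>I. s x = \<sigma> x) \<and> (\<forall>x\<in>I. t x = \<sigma> x)
      then X (mix I \<kappa> s) (mix I \<mu> t) else 0)" for \<sigma>
    by (simp add: emu_right[OF fin lV] emu_left[OF fin kV])
  have fc: "finite (confs I d)" using finite_confs finite_subset[OF IV fin] by blast
  show ?thesis
  proof (cases "s \<in> confs V d \<and> t \<in> confs V d \<and> (\<forall>x\<in>I. s x = t x)")
    case True
    have w: "restr I s \<in> confs I d" using True IV restr_confs by blast
    have "Pk V d I X \<kappa> \<mu> s t = (\<Sum>\<sigma>\<in>confs I d. opmult V d (opmult V d (emu V d I \<sigma> \<kappa>) X) (emu V d I \<mu> \<sigma>) s t)"
      unfolding Pk_def opsum_def by simp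
    also have "\<dots> = opmult V d (opmult V d (emu V d I (restr I s) \<kappa>) X) (emu V d I \<mu> (restr I s)) s t"
    proof (rule sum_collapse[OF fc w])
      fix u assume u: "u \<in> confs I d" "u \<noteq> restr I s"
      then obtain z where z: "z \<in> I" "u z \<noteq> restr I s z" using confsI_eq[OF u(1) w] by blast
      then have "s z \<noteq> u z" by (simp add: restr_def mix_def)
      then show "opmult V d (opmult V d (emu V d I u \<kappa>) X) (emu V d I \<mu> u) s t = 0"
        using trm[of u] z by auto
    qed
    also have "\<dots> = X (mix I \<kappa> s) (mix I \<mu> t)" using trm[of "restr I s"] True
      by (simp add: restr_def mix_def)
    finally show ?thesis using True by simp
  next
    case False
    have "Pk V d I X \<kappa> \<mu> s t = (\<Sum>\<sigma>\<in>confs I d. opmult V d (opmult V d (emu V d I \<sigma> \<kappa>) X) (emu V d I \<mu> \<sigma>) s t)"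
      unfolding Pk_def opsum_def by simp
    also have "\<dots> = 0" using False by (intro sum.neutral) (auto simp: trm)
    finally show ?thesis using False by (simp only: if_False)
  qed
qed



lemma Pk_ops: assumes "finite V" "I \<subseteq> V" "\<forall>x\<in>V. d x > 0" "\<kappa> \<in> confs I d" "\<mu> \<in> confs I d"
  shows "Pk V d I X \<kappa> \<mu> \<in> ops V d"
  unfolding ops_def using Pk_entry[OF assms] by auto

lemma Pk_supp_compl:
  assumes fin: "finite V" and IV: "I \<subseteq> V" and dpos: "\<forall>x\<in>V. d x > 0"
    and k: "\<kappa> \<in> confs I d" and l: "\<mu> \<in> confs I d"
  shows "supported_on V d (V - I) (Pk V d I X \<kappa> \<mu>)"
proof (rule supported_onI[OF Pk_ops[OF assms]])
  fix s t x assume "s \<in> confs V d" "t \<in> confs V d" "x \<in> V" "x \<notin> V - I" "s x \<noteq> t x"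
  then show "Pk V d I X \<kappa> \<mu> s t = 0" using Pk_entry[OF assms] by auto
next
  fix s t s' t' assume a: "s \<in> confs V d" "t \<in> confs V d" "s' \<in> confs V d" "t' \<in> confs V d"
    "\<And>x. x \<in> V - I \<Longrightarrow> s x = s' x" "\<And>x. x \<in> V - I \<Longrightarrow> t x = t' x"
    "\<And>x. x \<in> V \<Longrightarrow> x \<notin> V - I \<Longrightarrow> s x = t x" "\<And>x. x \<in> V \<Longrightarrow> x \<notin> V - I \<Longrightarrow> s' x = t' x"
  have kV: "\<kappa> \<in> confs V d" and lV: "\<mu> \<in> confs V d" using confs_sub[OF IV dpos] k l by blast+
  have "mix I \<kappa> s = mix I \<kappa> s'"
    by (rule confs_eqI[OF mix_confs[OF kV a(1)] mix_confs[OF kV a(3)]]) (use a in \<open>auto simp: mix_def\<close>)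
  moreover have "mix I \<mu> t = mix I \<mu> t'"
    by (rule confs_eqI[OF mix_confs[OF lV a(2)] mix_confs[OF lV a(4)]]) (use a in \<open>auto simp: mix_def\<close>)
  moreover have "\<forall>x\<in>I. s x = t x" "\<forall>x\<in>I. s' x = t' x" using a IV by auto
  ultimately show "Pk V d I X \<kappa> \<mu> s t = Pk V d I X \<kappa> \<mu> s' t'" using Pk_entry[OF assms] a by simp
qed

lemma Pk_supp_local:
  assumes fin: "finite V" and IV: "I \<subseteq> V" and dpos: "\<forall>x\<in>V. d x > 0"
    and k: "\<kappa> \<in> confs I d" and l: "\<mu> \<in> confs I d" and X: "supported_on V d K X"
  shows "supported_on V d K (Pk V d I X \<kappa> \<mu>)"
proof (rule supported_onI[OF Pk_ops[OF fin IV dpos k l]])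
  have kV: "\<kappa> \<in> confs V d" and lV: "\<mu> \<in> confs V d" using confs_sub[OF IV dpos] k l by blast+
  {
    fix s t z assume a: "s \<in> confs V d" "t \<in> confs V d" "z \<in> V" "z \<notin> K" "s z \<noteq> t z"
    show "Pk V d I X \<kappa> \<mu> s t = 0"
    proof (cases "z \<in> I")
      case True then show ?thesis using Pk_entry[OF fin IV dpos k l] a by auto
    next
      case False
      then have "mix I \<kappa> s z \<noteq> mix I \<mu> t z" using a by (simp add: mix_def)
      then have "X (mix I \<kappa> s) (mix I \<mu> t) = 0"
        using supp_zero[OF X mix_confs[OF kV a(1)] mix_confs[OF lV a(2)] a(3,4)] by blast
      then show ?thesis using Pk_entry[OF fin IV dpos k l] by simp
    qed
  }
  fix s t s' t' assume a: "s \<in> confs V d" "t \<in> confs V d" "s' \<in> confs V d" "t' \<in> confs V d"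
    "\<And>x. x \<in> K \<Longrightarrow> s x = s' x" "\<And>x. x \<in> K \<Longrightarrow> t x = t' x"
    "\<And>x. x \<in> V \<Longrightarrow> x \<notin> K \<Longrightarrow> s x = t x" "\<And>x. x \<in> V \<Longrightarrow> x \<notin> K \<Longrightarrow> s' x = t' x"
  have ceq: "(\<forall>x\<in>I. s x = t x) \<longleftrightarrow> (\<forall>x\<in>I. s' x = t' x)"
  proof -
    have "s x = t x \<longleftrightarrow> s' x = t' x" if "x \<in> I" for x
      using a(5-8)[of x] that IV by (cases "x \<in> K") auto
    then show ?thesis by blast
  qed
  have m: "mix I \<kappa> s \<in> confs V d" "mix I \<mu> t \<in> confs V d" "mix I \<kappa> s' \<in> confs V d" "mix I \<mu> t' \<in> confs V d"
    using mix_confs kV lV a by blast+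
  have Xeq: "X (mix I \<kappa> s) (mix I \<mu> t) = X (mix I \<kappa> s') (mix I \<mu> t')"
  proof (cases "\<exists>z\<in>I. z \<notin> K \<and> \<kappa> z \<noteq> \<mu> z")
    case True
    then obtain z where z: "z \<in> I" "z \<notin> K" "\<kappa> z \<noteq> \<mu> z" by blast
    have zV: "z \<in> V" using z IV by blast
    have "X (mix I \<kappa> s) (mix I \<mu> t) = 0"
      by (rule supp_zero[OF X m(1,2) zV z(2)]) (use z in \<open>simp add: mix_def\<close>)
    moreover have "X (mix I \<kappa> s') (mix I \<mu> t') = 0"
      by (rule supp_zero[OF X m(3,4) zV z(2)]) (use z in \<open>simp add: mix_def\<close>)
    ultimately show ?thesis by simp
  next
    case False
    show ?thesis
      by (rule supp_inv[OF X m]) (use a False in \<open>auto simp: mix_def\<close>)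
  qed
  show "Pk V d I X \<kappa> \<mu> s t = Pk V d I X \<kappa> \<mu> s' t'"
    using Pk_entry[OF fin IV dpos k l] a(1-4) ceq Xeq by simp
qed

lemma Pk_recon:
  assumes fin: "finite V" and IV: "I \<subseteq> V" and dpos: "\<forall>x\<in>V. d x > 0" and Xo: "X \<in> ops V d"
  shows "opsum (confs I d \<times> confs I d) (\<lambda>(\<kappa>, \<mu>). opmult V d (emu V d I \<kappa> \<mu>) (Pk V d I X \<kappa> \<mu>)) = X"
proof (intro ext)
  fix s t
  have trm: "opmult V d (emu V d I \<kappa> \<mu>) (Pk V d I X \<kappa> \<mu>) s t =
     (if s \<in> confs V d \<and> t \<in> confs V d \<and> (\<forall>x\<in>I. s x = \<kappa> x) \<and> (\<forall>x\<in>I. t x = \<mu> x) then X s t else 0)"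
    if k: "\<kappa> \<in> confs I d" and l: "\<mu> \<in> confs I d" for \<kappa> \<mu>
  proof -
    have lV: "\<mu> \<in> confs V d" using confs_sub[OF IV dpos] l by blast
    have e: "opmult V d (emu V d I \<kappa> \<mu>) (Pk V d I X \<kappa> \<mu>) s t =
      (if s \<in> confs V d \<and> (\<forall>x\<in>I. s x = \<kappa> x) then Pk V d I X \<kappa> \<mu> (mix I \<mu> s) t else 0)"
      by (rule emu_left[OF fin lV])
    show ?thesis
    proof (cases "s \<in> confs V d \<and> (\<forall>x\<in>I. s x = \<kappa> x)")
      case True
      have ms: "mix I \<mu> s \<in> confs V d" using mix_confs[OF lV] True by blast
      have m1: "mix I \<kappa> (mix I \<mu> s) = s" using True by (auto simp: mix_def)
      have m2: "(\<forall>x\<in>I. t x = \<mu> x) \<Longrightarrow> mix I \<mu> t = t" by (auto simp: mix_def)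
      have c: "(\<forall>x\<in>I. mix I \<mu> s x = t x) \<longleftrightarrow> (\<forall>x\<in>I. t x = \<mu> x)" by (auto simp: mix_def)
      show ?thesis using e True Pk_entry[OF fin IV dpos k l, where s="mix I \<mu> s" and t=t and X=X] ms m1 m2 c by auto
    next
      case False
      then show ?thesis using e by auto
    qed
  qed
  have fc: "finite (confs I d \<times> confs I d)" using finite_confs finite_subset[OF IV fin] by blast
  show "opsum (confs I d \<times> confs I d) (\<lambda>(\<kappa>, \<mu>). opmult V d (emu V d I \<kappa> \<mu>) (Pk V d I X \<kappa> \<mu>)) s t = X s t"
  proof (cases "s \<in> confs V d \<and> t \<in> confs V d")
    case True
    have w: "(restr I s, restr I t) \<in> confs I d \<times> confs I d" using True IV restr_confs by blast
    have "opsum (confs I d \<times> confs I d) (\<lambda>(\<kappa>, \<mu>). opmult V d (emu V d I \<kappa> \<mu>) (Pk V d I X \<kappa> \<mu>)) s t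
       = (\<Sum>p\<in>confs I d \<times> confs I d. (case p of (\<kappa>, \<mu>) \<Rightarrow> opmult V d (emu V d I \<kappa> \<mu>) (Pk V d I X \<kappa> \<mu>)) s t)"
      unfolding opsum_def by simp
    also have "\<dots> = (case (restr I s, restr I t) of (\<kappa>, \<mu>) \<Rightarrow> opmult V d (emu V d I \<kappa> \<mu>) (Pk V d I X \<kappa> \<mu>)) s t"
    proof (rule sum_collapse[OF fc w])
      fix p assume p: "p \<in> confs I d \<times> confs I d" "p \<noteq> (restr I s, restr I t)"
      obtain \<kappa> \<mu> where kl: "p = (\<kappa>, \<mu>)" by (cases p)
      have k: "\<kappa> \<in> confs I d" and l: "\<mu> \<in> confs I d" using p kl by auto
      have "\<kappa> \<noteq> restr I s \<or> \<mu> \<noteq> restr I t" using p kl by auto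
      then have "(\<exists>z\<in>I. \<kappa> z \<noteq> s z) \<or> (\<exists>z\<in>I. \<mu> z \<noteq> t z)"
      proof
        assume "\<kappa> \<noteq> restr I s"
        then obtain z where "z \<in> I" "\<kappa> z \<noteq> restr I s z" using confsI_eq[OF k restr_confs[OF _ IV]] True by blast
        then show ?thesis by (auto simp: restr_def mix_def)
      next
        assume "\<mu> \<noteq> restr I t"
        then obtain z where "z \<in> I" "\<mu> z \<noteq> restr I t z" using confsI_eq[OF l restr_confs[OF _ IV]] True by blast
        then show ?thesis by (auto simp: restr_def mix_def)
      qed
      then show "(case p of (\<kappa>, \<mu>) \<Rightarrow> opmult V d (emu V d I \<kappa> \<mu>) (Pk V d I X \<kappa> \<mu>)) s t = 0"
        using trm[OF k l] kl by auto
    qed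
    also have "\<dots> = X s t"
    proof -
      have "restr I s \<in> confs I d" "restr I t \<in> confs I d" using w by auto
      from trm[OF this] show ?thesis using True by (simp add: restr_def mix_def)
    qed
    finally show ?thesis .
  next
    case False
    have "opsum (confs I d \<times> confs I d) (\<lambda>(\<kappa>, \<mu>). opmult V d (emu V d I \<kappa> \<mu>) (Pk V d I X \<kappa> \<mu>)) s t = 0"
      unfolding opsum_def using False trm by (intro sum.neutral) auto
    moreover have "X s t = 0" using False Xo opsD by blast
    ultimately show ?thesis by simp
  qed
qed

lemma comm_from_Pk:
  assumes fin: "finite V" and IV: "I \<subseteq> V" and dpos: "\<forall>x\<in>V. d x > 0" and Xo: "X \<in> ops V d"
    and ce: "\<And>\<kappa> \<mu>. \<kappa> \<in> confs I d \<Longrightarrow> \<mu> \<in> confs I d \<Longrightarrow> opmult V d Q (emu V d I \<kappa> \<mu>) = opmult V d (emu V d I \<kappa> \<mu>) Q"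
    and cp: "\<And>\<kappa> \<mu>. \<kappa> \<in> confs I d \<Longrightarrow> \<mu> \<in> confs I d \<Longrightarrow> opmult V d Q (Pk V d I X \<kappa> \<mu>) = opmult V d (Pk V d I X \<kappa> \<mu>) Q"
  shows "opmult V d Q X = opmult V d X Q"
proof -
  let ?f = "\<lambda>(\<kappa>, \<mu>). opmult V d (emu V d I \<kappa> \<mu>) (Pk V d I X \<kappa> \<mu>)"
  have X: "X = opsum (confs I d \<times> confs I d) ?f" using Pk_recon[OF fin IV dpos Xo] by simp
  have "opmult V d Q (opsum (confs I d \<times> confs I d) ?f) = opsum (confs I d \<times> confs I d) (\<lambda>p. opmult V d Q (?f p))"
    by (rule opmult_opsum_right)
  also have "\<dots> = opsum (confs I d \<times> confs I d) (\<lambda>p. opmult V d (?f p) Q)"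
  proof (rule opsum_cong)
    fix p assume p: "p \<in> confs I d \<times> confs I d"
    obtain \<kappa> \<mu> where kl: "p = (\<kappa>, \<mu>)" by (cases p)
    have k: "\<kappa> \<in> confs I d" and l: "\<mu> \<in> confs I d" using p kl by auto
    show "opmult V d Q (?f p) = opmult V d (?f p) Q"
      using kl ce[OF k l] cp[OF k l] by (simp add: opmult_assoc[symmetric]) (simp add: opmult_assoc)
  qed
  also have "\<dots> = opmult V d (opsum (confs I d \<times> confs I d) ?f) Q"
    by (rule opmult_opsum_left[symmetric])
  finally show ?thesis using X by simp
qed



lemma P_alg_iff: "Q \<in> P_alg V d E R \<alpha> F \<longleftrightarrow> (\<exists>A. supported_on V d F A \<and> Q = \<alpha> A) \<and>
   (\<forall>P. supported_on V d (interior_R V E R F) P \<longrightarrow> opmult V d Q P = opmult V d P Q)"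
  unfolding P_alg_def alg_def by auto

lemma interior_sub: "interior_R V E R F \<subseteq> V" unfolding interior_R_def by auto

lemma star_part:
  assumes fin: "finite V" and aut: "is_star_automorphism V d \<alpha>" and FV: "F \<subseteq> V"
  shows "star_subalgebra V d (P_alg V d E R \<alpha> F)"
proof -
  let ?I = "interior_R V E R F"
  let ?P = "P_alg V d E R \<alpha> F"
  have sub: "?P \<subseteq> ops V d"
  proof
    fix Q assume "Q \<in> ?P"
    then obtain A where "supported_on V d F A" "Q = \<alpha> A" unfolding P_alg_iff by blast
    then show "Q \<in> ops V d" using aut_ops[OF aut] supp_ops by blast
  qed
  have idm: "opid V d \<in> ?P"
    unfolding P_alg_iff
  proof
    show "\<exists>A. supported_on V d F A \<and> opid V d = \<alpha> A" using aut_opid[OF aut fin] supp_opid by metis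
    show "\<forall>P. supported_on V d ?I P \<longrightarrow> opmult V d (opid V d) P = opmult V d P (opid V d)"
      using opid_left[OF fin] opid_right[OF fin] supp_ops by metis
  qed
  have cl: "opadd Q1 Q2 \<in> ?P \<and> opmult V d Q1 Q2 \<in> ?P" if q: "Q1 \<in> ?P" "Q2 \<in> ?P" for Q1 Q2
  proof -
    obtain A1 where A1: "supported_on V d F A1" "Q1 = \<alpha> A1"
      and c1: "\<And>P. supported_on V d ?I P \<Longrightarrow> opmult V d Q1 P = opmult V d P Q1"
      using q(1) unfolding P_alg_iff by blast
    obtain A2 where A2: "supported_on V d F A2" "Q2 = \<alpha> A2"
      and c2: "\<And>P. supported_on V d ?I P \<Longrightarrow> opmult V d Q2 P = opmult V d P Q2"
      using q(2) unfolding P_alg_iff by blast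
    have o1: "A1 \<in> ops V d" and o2: "A2 \<in> ops V d" using A1 A2 supp_ops by blast+
    have "opadd Q1 Q2 \<in> ?P"
      unfolding P_alg_iff
    proof
      show "\<exists>A. supported_on V d F A \<and> opadd Q1 Q2 = \<alpha> A"
        using supp_add[OF A1(1) A2(1)] aut_add[OF aut o1 o2] A1 A2 by metis
      show "\<forall>P. supported_on V d ?I P \<longrightarrow> opmult V d (opadd Q1 Q2) P = opmult V d P (opadd Q1 Q2)"
        using c1 c2 by (simp add: opmult_add_left opmult_add_right)
    qed
    moreover have "opmult V d Q1 Q2 \<in> ?P"
      unfolding P_alg_iff
    proof
      show "\<exists>A. supported_on V d F A \<and> opmult V d Q1 Q2 = \<alpha> A"
        using supp_mult[OF fin FV A1(1) A2(1)] aut_mult[OF aut o1 o2] A1 A2 by metis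
      show "\<forall>P. supported_on V d ?I P \<longrightarrow> opmult V d (opmult V d Q1 Q2) P = opmult V d P (opmult V d Q1 Q2)"
        using c1 c2 by (metis opmult_assoc)
    qed
    ultimately show ?thesis by blast
  qed
  have sc: "opscale c Q \<in> ?P" if q: "Q \<in> ?P" for c Q
  proof -
    obtain A where A: "supported_on V d F A" "Q = \<alpha> A"
      and c: "\<And>P. supported_on V d ?I P \<Longrightarrow> opmult V d Q P = opmult V d P Q"
      using q unfolding P_alg_iff by blast
    have o: "A \<in> ops V d" using A supp_ops by blast
    show ?thesis
      unfolding P_alg_iff
    proof
      show "\<exists>A. supported_on V d F A \<and> opscale c Q = \<alpha> A"
        using supp_scale[OF A(1)] aut_scale[OF aut o] A by metis
      show "\<forall>P. supported_on V d ?I P \<longrightarrow> opmult V d (opscale c Q) P = opmult V d P (opscale c Q)"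
        using c by (simp add: opmult_scale_left opmult_scale_right)
    qed
  qed
  have ad: "opadj Q \<in> ?P" if q: "Q \<in> ?P" for Q
  proof -
    obtain A where A: "supported_on V d F A" "Q = \<alpha> A"
      and c: "\<And>P. supported_on V d ?I P \<Longrightarrow> opmult V d Q P = opmult V d P Q"
      using q unfolding P_alg_iff by blast
    have o: "A \<in> ops V d" using A supp_ops by blast
    show ?thesis
      unfolding P_alg_iff
    proof
      show "\<exists>A. supported_on V d F A \<and> opadj Q = \<alpha> A"
        using supp_adj[OF A(1)] aut_adj[OF aut o] A by metis
      show "\<forall>P. supported_on V d ?I P \<longrightarrow> opmult V d (opadj Q) P = opmult V d P (opadj Q)"
      proof (intro allI impI)
        fix P assume P: "supported_on V d ?I P"
        have "opmult V d Q (opadj P) = opmult V d (opadj P) Q" using c supp_adj[OF P] by blast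
        then have "opadj (opmult V d Q (opadj P)) = opadj (opmult V d (opadj P) Q)" by simp
        then show "opmult V d (opadj Q) P = opmult V d P (opadj Q)"
          by (simp add: opadj_mult opadj_opadj)
      qed
    qed
  qed
  show ?thesis unfolding star_subalgebra_def using sub idm cl sc ad by blast
qed



lemma vs_part:
  assumes fin: "finite V" and sym: "\<forall>a b. E a b \<longrightarrow> E b a" and dpos: "\<forall>x\<in>V. d x > 0"
    and qca: "is_QCA V d E R \<alpha>" and FV: "F \<subseteq> V"
  shows "visibly_simple V d E (2 * R) (P_alg V d E R \<alpha> F)"
  unfolding visibly_simple_def
proof (intro ballI)
  let ?I = "interior_R V E R F"
  let ?P = "P_alg V d E R \<alpha> F"
  have aut: "is_star_automorphism V d \<alpha>" using qca unfolding is_QCA_def by blast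
  have loc: "\<forall>x\<in>V. \<forall>Q. supported_on V d {x} Q \<longrightarrow> supported_on V d (ball V E R x) (\<alpha> Q)"
    using qca unfolding is_QCA_def by blast
  have IV: "?I \<subseteq> V" by (rule interior_sub)
  fix Q x assume QP: "Q \<in> ?P" and xs: "x \<in> support V d Q"
  obtain A where A: "supported_on V d F A" "Q = \<alpha> A"
    and cQ: "\<And>P. supported_on V d ?I P \<Longrightarrow> opmult V d Q P = opmult V d P Q"
    using QP unfolding P_alg_iff by blast
  have Ao: "A \<in> ops V d" using A supp_ops by blast
  have Qo: "Q \<in> ops V d" using aut_ops[OF aut Ao] A by simp
  have xV: "x \<in> V" using xs supp_V[OF Qo] unfolding support_def by blast
  have nsupp: "\<not> supported_on V d (V - {x}) Q" using xs unfolding support_def by blast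
  have "\<exists>y\<in>F \<inter> ball V E R x. \<exists>B. supported_on V d {y} B \<and> opmult V d A B \<noteq> opmult V d B A"
  proof (rule ccontr)
    assume nh: "\<not> ?thesis"
    have Aloc: "supported_on V d (V - V \<inter> ball V E R x) A"
    proof (rule comm_single_sites[OF fin Ao])
      fix y P assume y: "y \<in> V \<inter> ball V E R x" and P: "supported_on V d {y} P"
      show "opmult V d A P = opmult V d P A"
      proof (cases "y \<in> F")
        case True then show ?thesis using nh y P by blast
      next
        case False
        show ?thesis by (rule disjoint_commute[OF fin _ A(1) P]) (use False in blast)
      qed
    qed auto
    have "supported_on V d (V - {x}) Q"
    proof (rule comm_single_sites[OF fin Qo])
      fix y P assume y: "y \<in> {x}" and P: "supported_on V d {y} P"
      have "\<exists>W. supported_on V d (V \<inter> ball V E R x) W \<and> \<alpha> W = P"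
      proof (rule pullback[OF fin aut loc _ P])
        fix z assume z: "z \<in> V" "z \<notin> V \<inter> ball V E R x"
        have "x \<notin> ball V E R z"
        proof
          assume "x \<in> ball V E R z"
          then have "z \<in> ball V E R x" by (rule ball_sym[OF sym])
          then show False using z by blast
        qed
        then show "ball V E R z \<inter> {y} = {}" using y by blast
      qed auto
      then obtain W where W: "supported_on V d (V \<inter> ball V E R x) W" "\<alpha> W = P" by blast
      have Wo: "W \<in> ops V d" using W supp_ops by blast
      have "opmult V d A W = opmult V d W A"
        by (rule disjoint_commute[OF fin _ Aloc W(1)]) blast
      then show "opmult V d Q P = opmult V d P Q"
        using aut_mult[OF aut Ao Wo] aut_mult[OF aut Wo Ao] A(2) W(2) by simp
    qed (use xV in auto)
    then show False using nsupp by blast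
  qed
  then obtain y B where y: "y \<in> F" "y \<in> ball V E R x" and B: "supported_on V d {y} B"
    and AB: "opmult V d A B \<noteq> opmult V d B A" by blast
  have Bo: "B \<in> ops V d" using B supp_ops by blast
  define X where "X = \<alpha> B"
  have Xo: "X \<in> ops V d" unfolding X_def using aut_ops[OF aut Bo] .
  have XK: "supported_on V d (ball V E (2 * R) x) X"
  proof -
    have yV: "y \<in> V" using y FV by blast
    have "supported_on V d (ball V E R y) X" unfolding X_def using loc yV B by blast
    moreover have "ball V E R y \<subseteq> ball V E (2 * R) x"
    proof
      fix z assume "z \<in> ball V E R y"
      then have "z \<in> ball V E (R + R) x" by (rule ball_trans[OF y(2)])
      then show "z \<in> ball V E (2 * R) x" by (simp add: mult_2)
    qed
    ultimately show ?thesis by (rule supp_mono)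
  qed
  have XF: "X \<in> \<alpha> ` alg V d F"
  proof -
    have "supported_on V d F B" using supp_mono[OF B] y(1) by blast
    then have "B \<in> alg V d F" unfolding alg_def by simp
    then show ?thesis unfolding X_def by (rule imageI)
  qed
  have QX: "opmult V d Q X \<noteq> opmult V d X Q"
  proof
    assume "opmult V d Q X = opmult V d X Q"
    then have "\<alpha> (opmult V d A B) = \<alpha> (opmult V d B A)"
      using aut_mult[OF aut Ao Bo] aut_mult[OF aut Bo Ao] A(2) X_def by simp
    then show False using AB aut_inj[OF aut opmult_ops[OF Ao Bo] opmult_ops[OF Bo Ao]] by blast
  qed
  have emuF: "emu V d ?I \<sigma> \<tau> \<in> \<alpha> ` alg V d F" for \<sigma> \<tau>
  proof -
    have "\<exists>W. supported_on V d F W \<and> \<alpha> W = emu V d ?I \<sigma> \<tau>"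
    proof (rule pullback[OF fin aut loc FV emu_supp[OF IV]])
      fix z assume z: "z \<in> V" "z \<notin> F"
      show "ball V E R z \<inter> ?I = {}"
      proof (rule ccontr)
        assume "ball V E R z \<inter> ?I \<noteq> {}"
        then obtain w where w: "w \<in> ball V E R z" "w \<in> ?I" by blast
        have "z \<in> ball V E R w" using ball_sym[OF sym w(1)] .
        then show False using w(2) z unfolding interior_R_def by blast
      qed
    qed
    then obtain W where W: "supported_on V d F W" "\<alpha> W = emu V d ?I \<sigma> \<tau>" by blast
    have "W \<in> alg V d F" unfolding alg_def using W(1) by simp
    then have "\<alpha> W \<in> \<alpha> ` alg V d F" by (rule imageI)
    then show ?thesis unfolding W(2) .
  qed
  have ce: "opmult V d Q (emu V d ?I \<kappa> \<mu>) = opmult V d (emu V d ?I \<kappa> \<mu>) Q" for \<kappa> \<mu>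
    using cQ emu_supp[OF IV] by blast
  have "\<exists>\<kappa>\<in>confs ?I d. \<exists>\<mu>\<in>confs ?I d. opmult V d Q (Pk V d ?I X \<kappa> \<mu>) \<noteq> opmult V d (Pk V d ?I X \<kappa> \<mu>) Q"
  proof (rule ccontr)
    assume "\<not> ?thesis"
    then have "opmult V d Q (Pk V d ?I X \<kappa> \<mu>) = opmult V d (Pk V d ?I X \<kappa> \<mu>) Q"
      if "\<kappa> \<in> confs ?I d" "\<mu> \<in> confs ?I d" for \<kappa> \<mu> using that by blast
    then have "opmult V d Q X = opmult V d X Q" by (rule comm_from_Pk[OF fin IV dpos Xo ce])
    then show False using QX by simp
  qed
  then obtain \<kappa> \<mu> where k: "\<kappa> \<in> confs ?I d" and l: "\<mu> \<in> confs ?I d"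
    and nc: "opmult V d Q (Pk V d ?I X \<kappa> \<mu>) \<noteq> opmult V d (Pk V d ?I X \<kappa> \<mu>) Q" by blast
  have PkF: "Pk V d ?I X \<kappa> \<mu> \<in> \<alpha> ` alg V d F"
    unfolding Pk_def
  proof (rule opsum_closed)
    show "finite (confs ?I d)" using finite_confs finite_subset[OF IV fin] by blast
    show "zop \<in> \<alpha> ` alg V d F" by (rule image_alg_closed(3)[OF fin aut FV])
    show "\<And>P Q. P \<in> \<alpha> ` alg V d F \<Longrightarrow> Q \<in> \<alpha> ` alg V d F \<Longrightarrow> opadd P Q \<in> \<alpha> ` alg V d F"
      by (rule image_alg_closed(2)[OF fin aut FV])
    fix \<sigma> show "opmult V d (opmult V d (emu V d ?I \<sigma> \<kappa>) X) (emu V d ?I \<mu> \<sigma>) \<in> \<alpha> ` alg V d F"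
      by (intro image_alg_closed(1)[OF fin aut FV] emuF XF)
  qed
  have PkC: "opmult V d (Pk V d ?I X \<kappa> \<mu>) P = opmult V d P (Pk V d ?I X \<kappa> \<mu>)"
    if P: "supported_on V d ?I P" for P
    by (rule disjoint_commute[OF fin _ Pk_supp_compl[OF fin IV dpos k l] P]) blast
  have PkP: "Pk V d ?I X \<kappa> \<mu> \<in> ?P"
  proof -
    have "\<forall>P\<in>alg V d ?I. opmult V d (Pk V d ?I X \<kappa> \<mu>) P = opmult V d P (Pk V d ?I X \<kappa> \<mu>)"
      using PkC unfolding alg_def by simp
    then show ?thesis unfolding P_alg_def using PkF by (intro CollectI conjI)
  qed
  have PkK: "supported_on V d (ball V E (2 * R) x) (Pk V d ?I X \<kappa> \<mu>)"
    by (rule Pk_supp_local[OF fin IV dpos k l XK])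
  show "\<exists>P\<in>?P. supported_on V d (ball V E (2 * R) x) P \<and> opmult V d Q P \<noteq> opmult V d P Q"
    using PkP PkK nc by blast
qed


theorem mainTheorem19:
  fixes V :: "'v set" and d :: "'v \<Rightarrow> nat" and E :: "'v \<Rightarrow> 'v \<Rightarrow> bool"
    and R :: nat and \<alpha> :: "'v op \<Rightarrow> 'v op" and F :: "'v set"
  assumes "finite V"
    and "\<forall>a b. E a b \<longrightarrow> E b a"
    and "\<forall>x\<in>V. d x > 0"
    and "is_QCA V d E R \<alpha>"
    and "F \<subseteq> V"
  shows "star_subalgebra V d (P_alg V d E R \<alpha> F) \<and>
         visibly_simple V d E (2 * R) (P_alg V d E R \<alpha> F)"
proof
  have aut: "is_star_automorphism V d \<alpha>" using assms(4) unfolding is_QCA_def by blast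
  show "star_subalgebra V d (P_alg V d E R \<alpha> F)" by (rule star_part[OF assms(1) aut assms(5)])
  show "visibly_simple V d E (2 * R) (P_alg V d E R \<alpha> F)" by (rule vs_part[OF assms])
qed

end
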